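(* Let $I\subseteq\mathbb R[x_1,\dots,x_n]$ be an ideal such that $\mathcal V_{\mathbb R}(I)$ has a convex-singular point. Then $I$ is not $\mathrm{TH}$-exact.
   Context: $\mathbb{R}[\mathbf x]_k$ denotes the polynomials of degree at most $k$. $\mathcal V_{\mathbb R}(I)=\{x\in\mathbb R^n: f(x)=0\ \forall f\in I\}$. A polynomial $h$ is $k$-sos modulo $I$ if there are $g_1,\dots,g_r\in\mathbb{R}[\mathbf x]_k$ with $h-\sum_i g_i^2\in I$. The $k$-th theta body is $\mathrm{TH}_k(I)=\{p\in\mathbb R^n: l(p)\ge 0$ for every $l\in\mathbb{R}[\mathbf x]_1$ that is $k$-sos modulo $I\}$. $I$ is $\mathrm{TH}_k$-exact if $\mathrm{TH}_k(I)=\operatorname{cl}(\operatorname{conv}(\mathcal V_{\mathbb R}(I)))$, and $\mathrm{TH}$-exact if it is $\mathrm{TH}_k$-exact for some $k$. For $p\in\mathcal V_{\mathbb R}(I)$, the tangent space $T_p(I)$ is the affine subspace through $p$ orthogonal to the linear span of the gradients $\nabla f(p)$ of all polynomials $f$ vanishing on $\mathcal V_{\mathbb R}(I)$. A point $p\in\mathcal V_{\mathbb R}(I)$ is convex-singular if it lies on the (relative) boundary of $\operatorname{conv}(\mathcal V_{\mathbb R}(I))$ and $T_p(I)$ intersects the relative interior of $\operatorname{conv}(\mathcal V_{\mathbb R}(I))$. *)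

theory Defs
  imports "HOL-Analysis.Analysis"
begin

text \<open>Polynomials in R[x_1..x_n] are represented by the polynomial functions on real^'n
  (faithful since R is infinite).\<close>

definition monomial_fun :: "('n::finite \<Rightarrow> nat) \<Rightarrow> real^'n \<Rightarrow> real" where
  "monomial_fun \<alpha> x = (\<Prod>i\<in>UNIV. (x $ i) ^ \<alpha> i)"

definition poly_deg_le :: "nat \<Rightarrow> (real^'n::finite \<Rightarrow> real) \<Rightarrow> bool" where
  "poly_deg_le k f \<longleftrightarrow> (\<exists>c :: ('n \<Rightarrow> nat) \<Rightarrow> real.
      finite {\<alpha>. c \<alpha> \<noteq> 0} \<and> (\<forall>\<alpha>. c \<alpha> \<noteq> 0 \<longrightarrow> sum \<alpha> UNIV \<le> k) \<and>
      f = (\<lambda>x. \<Sum>\<alpha>\<in>{\<alpha>. c \<alpha> \<noteq> 0}. c \<alpha> * monomial_fun \<alpha> x))"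

definition poly_fun :: "(real^'n::finite \<Rightarrow> real) \<Rightarrow> bool" where
  "poly_fun f \<longleftrightarrow> (\<exists>k. poly_deg_le k f)"

definition poly_ideal :: "(real^'n::finite \<Rightarrow> real) set \<Rightarrow> bool" where
  "poly_ideal I \<longleftrightarrow> I \<noteq> {} \<and> (\<forall>f\<in>I. poly_fun f) \<and>
     (\<forall>f\<in>I. \<forall>g\<in>I. (\<lambda>x. f x + g x) \<in> I) \<and>
     (\<forall>f\<in>I. \<forall>h. poly_fun h \<longrightarrow> (\<lambda>x. h x * f x) \<in> I)"

definition real_variety :: "(real^'n::finite \<Rightarrow> real) set \<Rightarrow> (real^'n) set" where
  "real_variety I = {x. \<forall>f\<in>I. f x = 0}"

definition sos_mod :: "(real^'n::finite \<Rightarrow> real) set \<Rightarrow> nat \<Rightarrow> (real^'n \<Rightarrow> real) \<Rightarrow> bool" where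
  "sos_mod I k h \<longleftrightarrow> (\<exists>gs :: (real^'n \<Rightarrow> real) list.
      (\<forall>g\<in>set gs. poly_deg_le k g) \<and> (\<lambda>x. h x - (\<Sum>g\<leftarrow>gs. (g x)^2)) \<in> I)"

definition theta_body :: "nat \<Rightarrow> (real^'n::finite \<Rightarrow> real) set \<Rightarrow> (real^'n) set" where
  "theta_body k I = {p. \<forall>l. poly_deg_le 1 l \<and> sos_mod I k l \<longrightarrow> l p \<ge> 0}"

definition TH_exact_k :: "nat \<Rightarrow> (real^'n::finite \<Rightarrow> real) set \<Rightarrow> bool" where
  "TH_exact_k k I \<longleftrightarrow> theta_body k I = closure (convex hull (real_variety I))"

definition TH_exact :: "(real^'n::finite \<Rightarrow> real) set \<Rightarrow> bool" where
  "TH_exact I \<longleftrightarrow> (\<exists>k\<ge>1. TH_exact_k k I)"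

definition gradient :: "(real^'n::finite \<Rightarrow> real) \<Rightarrow> real^'n \<Rightarrow> real^'n" where
  "gradient f p = (\<chi> i. frechet_derivative f (at p) (axis i 1))"

definition tangent_space :: "(real^'n::finite \<Rightarrow> real) set \<Rightarrow> real^'n \<Rightarrow> (real^'n) set" where
  "tangent_space I p = {x. \<forall>f. poly_fun f \<and> (\<forall>y\<in>real_variety I. f y = 0)
      \<longrightarrow> (x - p) \<bullet> gradient f p = 0}"

definition convex_singular :: "(real^'n::finite \<Rightarrow> real) set \<Rightarrow> real^'n \<Rightarrow> bool" where
  "convex_singular I p \<longleftrightarrow> p \<in> real_variety I \<and>
     p \<in> rel_frontier (convex hull (real_variety I)) \<and>
     tangent_space I p \<inter> rel_interior (convex hull (real_variety I)) \<noteq> {}"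

end

theory Submission imports Defs begin

lemma mono_diff: "monomial_fun \<alpha> differentiable (at x)"
proof -
  have "\<And>i. (\<lambda>x. (x$i)^\<alpha> i) differentiable (at x)"
    by (intro differentiable_power bounded_linear_imp_differentiable bounded_linear_vec_nth)
  then have D: "\<And>i. ((\<lambda>x. (x$i)^\<alpha> i) has_derivative frechet_derivative (\<lambda>x. (x$i)^\<alpha> i) (at x)) (at x)"
    using frechet_derivative_works by blast
  have "((\<lambda>x. \<Prod>i\<in>UNIV. (x$i)^\<alpha> i) has_derivative (\<lambda>y. \<Sum>i\<in>UNIV. frechet_derivative (\<lambda>x. (x$i)^\<alpha> i) (at x) y * (\<Prod>j\<in>UNIV - {i}. (x$j)^\<alpha> j))) (at x)"
    by (rule has_derivative_prod) (use D in blast)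
  then show ?thesis unfolding monomial_fun_def[abs_def] differentiable_def by blast
qed

lemma deg_diff: "poly_deg_le k f \<Longrightarrow> f differentiable (at x)"
  unfolding poly_deg_le_def
  by (auto intro!: differentiable_sum differentiable_mult mono_diff simp: differentiable_const)

lemma poly_diff: "poly_fun f \<Longrightarrow> f differentiable (at x)"
  unfolding poly_fun_def using deg_diff by blast

lemma grad_inner:
  fixes f :: "real^'n::finite \<Rightarrow> real"
  assumes "(f has_derivative f') (at p)"
  shows "v \<bullet> gradient f p = f' v"
proof -
  have fd: "frechet_derivative f (at p) = f'" using frechet_derivative_at[OF assms] by simp
  have lin: "linear f'" using assms has_derivative_linear by blast
  have "f' v = f' (\<Sum>i\<in>UNIV. v $ i *\<^sub>R axis i 1)"
    using basis_expansion[of v] by (simp add: scalar_mult_eq_scaleR)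
  also have "\<dots> = (\<Sum>i\<in>UNIV. v $ i * f' (axis i 1))"
    using lin by (simp add: linear_sum linear_scale)
  finally show ?thesis unfolding gradient_def fd inner_vec_def by simp
qed
lemma sum_ext_pt:
  assumes "finite F"
  shows "(\<Sum>y\<in>insert y0 F. ((if y \<in> F then lam y else 0) + (if y = y0 then mu else 0)) * e y)
       = (\<Sum>y\<in>F. lam y * e y) + mu * (e y0 :: real)"
proof -
  have "(\<Sum>y\<in>insert y0 F. ((if y \<in> F then lam y else 0) + (if y = y0 then mu else 0)) * e y)
      = (\<Sum>y\<in>insert y0 F. (if y \<in> F then lam y * e y else 0)) + (\<Sum>y\<in>insert y0 F. (if y = y0 then mu * e y else 0))"
    by (subst sum.distrib[symmetric]) (rule sum.cong; auto simp: distrib_right)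
  also have "(\<Sum>y\<in>insert y0 F. (if y \<in> F then lam y * e y else 0)) = (\<Sum>y\<in>F. lam y * e y)"
    using assms by (simp add: sum.If_cases Int_absorb1 subset_insertI)
  also have "(\<Sum>y\<in>insert y0 F. (if y = y0 then mu * e y else 0)) = mu * e y0"
    using assms by (simp add: sum.delta)
  finally show ?thesis .
qed

lemma dual:
  fixes e :: "'y \<Rightarrow> 'a \<Rightarrow> real" and d :: "'a \<Rightarrow> real"
  assumes "finite M"
    and "\<And>c. (\<forall>y\<in>Y. (\<Sum>a\<in>M. e y a * c a) = 0) \<Longrightarrow> (\<Sum>a\<in>M. d a * c a) = 0"
  shows "\<exists>F lam. finite F \<and> F \<subseteq> Y \<and> (\<forall>a\<in>M. d a = (\<Sum>y\<in>F. lam y * e y a))"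
  using assms
proof (induction M arbitrary: e d rule: finite_induct)
  case empty
  show ?case by (rule exI[of _ "{}"]) auto
next
  case (insert m M)
  show ?case
  proof (cases "\<exists>y0\<in>Y. e y0 m \<noteq> 0")
    case False
    hence em: "\<forall>y\<in>Y. e y m = 0" by auto
    have dm: "d m = 0"
    proof -
      let ?c = "\<lambda>a. if a = m then 1 else (0::real)"
      have "\<forall>y\<in>Y. (\<Sum>a\<in>insert m M. e y a * ?c a) = 0"
        using insert.hyps em by simp (auto intro!: sum.neutral)
      then have A: "(\<Sum>a\<in>insert m M. d a * ?c a) = 0" by (rule insert.prems)
      moreover have "(\<Sum>a\<in>M. d a * ?c a) = 0" using insert.hyps by (auto intro!: sum.neutral)
      moreover have "(\<Sum>a\<in>insert m M. d a * ?c a) = d m + (\<Sum>a\<in>M. d a * ?c a)" using insert.hyps by simp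
      ultimately show ?thesis by simp
    qed
    have "\<exists>F lam. finite F \<and> F \<subseteq> Y \<and> (\<forall>a\<in>M. d a = (\<Sum>y\<in>F. lam y * e y a))"
    proof (rule insert.IH)
      fix c assume H: "\<forall>y\<in>Y. (\<Sum>a\<in>M. e y a * c a) = 0"
      have "\<forall>y\<in>Y. (\<Sum>a\<in>insert m M. e y a * c a) = 0"
        using insert.hyps em H by simp
      from insert.prems[OF this] show "(\<Sum>a\<in>M. d a * c a) = 0" using insert.hyps dm by simp
    qed
    then obtain F lam where F: "finite F" "F \<subseteq> Y" "\<forall>a\<in>M. d a = (\<Sum>y\<in>F. lam y * e y a)" by blast
    have "\<forall>a\<in>insert m M. d a = (\<Sum>y\<in>F. lam y * e y a)"
      using F dm em by (auto intro!: sum.neutral)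
    then show ?thesis using F by blast
  next
    case True
    then obtain y0 where y0: "y0 \<in> Y" "e y0 m \<noteq> 0" by blast
    define e' where "e' y a = e y a - (e y m / e y0 m) * e y0 a" for y a
    define d' where "d' a = d a - (d m / e y0 m) * e y0 a" for a
    have "\<exists>F lam. finite F \<and> F \<subseteq> Y \<and> (\<forall>a\<in>M. d' a = (\<Sum>y\<in>F. lam y * e' y a))"
    proof (rule insert.IH)
      fix c assume H: "\<forall>y\<in>Y. (\<Sum>a\<in>M. e' y a * c a) = 0"
      define S0 where "S0 = (\<Sum>a\<in>M. e y0 a * c a)"
      define c' where "c' = c(m := - S0 / e y0 m)"
      have sM: "(\<Sum>a\<in>M. f a * c' a) = (\<Sum>a\<in>M. f a * c a)" for f
        using insert.hyps unfolding c'_def by (intro sum.cong) auto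
      have "\<forall>y\<in>Y. (\<Sum>a\<in>insert m M. e y a * c' a) = 0"
      proof
        fix y assume y: "y \<in> Y"
        have "(\<Sum>a\<in>M. e' y a * c a) = (\<Sum>a\<in>M. e y a * c a) - (e y m / e y0 m) * S0"
          unfolding e'_def S0_def by (simp add: algebra_simps sum_subtractf sum_distrib_left)
        with H y have "(\<Sum>a\<in>M. e y a * c a) = (e y m / e y0 m) * S0" by simp
        then show "(\<Sum>a\<in>insert m M. e y a * c' a) = 0"
          using insert.hyps sM[of "e y"] by (simp add: c'_def)
      qed
      from insert.prems[OF this] have "d m * c' m + (\<Sum>a\<in>M. d a * c a) = 0"
        using insert.hyps sM[of d] by simp
      then have "(\<Sum>a\<in>M. d a * c a) = (d m / e y0 m) * S0"
        using y0 by (simp add: c'_def)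
      moreover have "(\<Sum>a\<in>M. d' a * c a) = (\<Sum>a\<in>M. d a * c a) - (d m / e y0 m) * S0"
        unfolding d'_def S0_def by (simp add: algebra_simps sum_subtractf sum_distrib_left)
      ultimately show "(\<Sum>a\<in>M. d' a * c a) = 0" by simp
    qed
    then obtain F lam where F: "finite F" "F \<subseteq> Y" "\<forall>a\<in>M. d' a = (\<Sum>y\<in>F. lam y * e' y a)" by blast
    define mu where "mu = (d m - (\<Sum>y\<in>F. lam y * e y m)) / e y0 m"
    define lam' where "lam' y = (if y \<in> F then lam y else 0) + (if y = y0 then mu else 0)" for y
    have key: "d a = (\<Sum>y\<in>F. lam y * e y a) + mu * e y0 a" if a: "a \<in> insert m M" for a
    proof (cases "a = m")
      case True
      then show ?thesis using y0 by (simp add: mu_def)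
    next
      case False
      with a have aM: "a \<in> M" by auto
      have "(\<Sum>y\<in>F. lam y * e' y a) = (\<Sum>y\<in>F. lam y * e y a) - (\<Sum>y\<in>F. lam y * e y m) / e y0 m * e y0 a"
        unfolding e'_def by (simp add: algebra_simps sum_subtractf sum_distrib_left sum_distrib_right sum_divide_distrib)
      with F(3) aM have "d' a = (\<Sum>y\<in>F. lam y * e y a) - (\<Sum>y\<in>F. lam y * e y m) / e y0 m * e y0 a" by simp
      then show ?thesis unfolding d'_def mu_def using y0 by (simp add: field_simps)
    qed
    show ?thesis
    proof (intro exI conjI)
      show "finite (insert y0 F)" using F by simp
      show "insert y0 F \<subseteq> Y" using F y0 by simp
      show "\<forall>a\<in>insert m M. d a = (\<Sum>y\<in>insert y0 F. lam' y * e y a)"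
      proof
        fix a assume a: "a \<in> insert m M"
        show "d a = (\<Sum>y\<in>insert y0 F. lam' y * e y a)"
        proof -
          have "(\<Sum>y\<in>insert y0 F. ((if y \<in> F then lam y else 0) + (if y = y0 then mu else 0)) * e y a) = (\<Sum>y\<in>F. lam y * e y a) + mu * e y0 a"
            by (rule sum_ext_pt[OF F(1)])
          then show ?thesis using key[OF a] unfolding lam'_def by simp
        qed
      qed
    qed
  qed
qed
lemma mono_hasd: "(monomial_fun \<alpha> has_derivative frechet_derivative (monomial_fun \<alpha>) (at p)) (at p)"
  using mono_diff frechet_derivative_works by blast

lemma comb_grad:
  "v \<bullet> gradient (\<lambda>x. \<Sum>\<alpha>\<in>A. c \<alpha> * monomial_fun \<alpha> x) p
     = (\<Sum>\<alpha>\<in>A. c \<alpha> * frechet_derivative (monomial_fun \<alpha>) (at p) v)"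
proof -
  have "((\<lambda>x. \<Sum>\<alpha>\<in>A. c \<alpha> * monomial_fun \<alpha> x) has_derivative
      (\<lambda>h. \<Sum>\<alpha>\<in>A. c \<alpha> * frechet_derivative (monomial_fun \<alpha>) (at p) h)) (at p)"
    by (intro has_derivative_sum has_derivative_mult_right mono_hasd)
  from grad_inner[OF this] show ?thesis .
qed

lemma finite_M: "finite {\<alpha>::'n::finite \<Rightarrow> nat. sum \<alpha> UNIV \<le> k}"
proof (rule finite_subset)
  show "{\<alpha>::'n::finite \<Rightarrow> nat. sum \<alpha> UNIV \<le> k} \<subseteq> Pi\<^sub>E UNIV (\<lambda>_. {..k})"
  proof
    fix \<alpha> :: "'n \<Rightarrow> nat" assume "\<alpha> \<in> {\<alpha>. sum \<alpha> UNIV \<le> k}"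
    then have "\<alpha> i \<le> k" for i using member_le_sum[of i UNIV \<alpha>] by auto
    then show "\<alpha> \<in> Pi\<^sub>E UNIV (\<lambda>_. {..k})" by (simp add: PiE_iff)
  qed
  show "finite (Pi\<^sub>E (UNIV::'n set) (\<lambda>_. {..k}))" by (intro finite_PiE) auto
qed

lemma deg_le_M:
  assumes "poly_deg_le k g"
  shows "\<exists>c. g = (\<lambda>x. \<Sum>\<alpha>\<in>{\<alpha>::'n::finite \<Rightarrow> nat. sum \<alpha> UNIV \<le> k}. c \<alpha> * monomial_fun \<alpha> x)"
proof -
  obtain c where c: "finite {\<alpha>. c \<alpha> \<noteq> 0}" "\<forall>\<alpha>. c \<alpha> \<noteq> 0 \<longrightarrow> sum \<alpha> UNIV \<le> k"
    "g = (\<lambda>x. \<Sum>\<alpha>\<in>{\<alpha>. c \<alpha> \<noteq> 0}. c \<alpha> * monomial_fun \<alpha> x)"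
    using assms unfolding poly_deg_le_def by blast
  have "(\<Sum>\<alpha>\<in>{\<alpha>. c \<alpha> \<noteq> 0}. c \<alpha> * monomial_fun \<alpha> x) = (\<Sum>\<alpha>\<in>{\<alpha>::'n \<Rightarrow> nat. sum \<alpha> UNIV \<le> k}. c \<alpha> * monomial_fun \<alpha> x)" for x
    by (rule sum.mono_neutral_left[OF finite_M]) (use c in auto)
  then show ?thesis using c(3) by auto
qed

lemma M_deg_le:
  "poly_deg_le k (\<lambda>x. \<Sum>\<alpha>\<in>{\<alpha>::'n::finite \<Rightarrow> nat. sum \<alpha> UNIV \<le> k}. c \<alpha> * monomial_fun \<alpha> x)"
proof -
  let ?M = "{\<alpha>::'n::finite \<Rightarrow> nat. sum \<alpha> UNIV \<le> k}"
  define c' where "c' \<alpha> = (if \<alpha> \<in> ?M then c \<alpha> else 0)" for \<alpha>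
  have sub: "{\<alpha>. c' \<alpha> \<noteq> 0} \<subseteq> ?M" unfolding c'_def by auto
  have "(\<Sum>\<alpha>\<in>?M. c \<alpha> * monomial_fun \<alpha> x) = (\<Sum>\<alpha>\<in>{\<alpha>. c' \<alpha> \<noteq> 0}. c' \<alpha> * monomial_fun \<alpha> x)" for x
  proof -
    have "(\<Sum>\<alpha>\<in>?M. c \<alpha> * monomial_fun \<alpha> x) = (\<Sum>\<alpha>\<in>?M. c' \<alpha> * monomial_fun \<alpha> x)"
      unfolding c'_def by (rule sum.cong) auto
    also have "\<dots> = (\<Sum>\<alpha>\<in>{\<alpha>. c' \<alpha> \<noteq> 0}. c' \<alpha> * monomial_fun \<alpha> x)"
      by (rule sum.mono_neutral_right[OF finite_M sub]) auto
    finally show ?thesis .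
  qed
  then show ?thesis unfolding poly_deg_le_def
    using sub finite_subset[OF sub finite_M]
    by (intro exI[of _ c']) auto
qed

lemma grad_span:
  fixes I :: "(real^'n::finite \<Rightarrow> real) set" and p q :: "real^'n"
  assumes tang: "q \<in> tangent_space I p"
  shows "\<exists>F lam. finite F \<and> F \<subseteq> real_variety I \<and>
     (\<forall>g. poly_deg_le k g \<longrightarrow> (q - p) \<bullet> gradient g p = (\<Sum>y\<in>F. lam y * g y))"
proof -
  let ?M = "{\<alpha>::'n \<Rightarrow> nat. sum \<alpha> UNIV \<le> k}"
  let ?d = "\<lambda>\<alpha>. frechet_derivative (monomial_fun \<alpha>) (at p) (q - p)"
  have "\<exists>F lam. finite F \<and> F \<subseteq> real_variety I \<and> (\<forall>a\<in>?M. ?d a = (\<Sum>y\<in>F. lam y * monomial_fun a y))"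
  proof (rule dual[OF finite_M])
    fix c assume H: "\<forall>y\<in>real_variety I. (\<Sum>a\<in>?M. monomial_fun a y * c a) = 0"
    let ?f = "\<lambda>x. \<Sum>\<alpha>\<in>?M. c \<alpha> * monomial_fun \<alpha> x"
    have "poly_fun ?f" unfolding poly_fun_def using M_deg_le by blast
    moreover have "\<forall>y\<in>real_variety I. ?f y = 0" using H by (simp add: mult.commute)
    ultimately have "(q - p) \<bullet> gradient ?f p = 0"
      using tang unfolding tangent_space_def by blast
    then show "(\<Sum>a\<in>?M. ?d a * c a) = 0" unfolding comb_grad by (simp add: mult.commute)
  qed
  then obtain F lam where F: "finite F" "F \<subseteq> real_variety I"
    "\<forall>a\<in>?M. ?d a = (\<Sum>y\<in>F. lam y * monomial_fun a y)" by blast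
  have "(q - p) \<bullet> gradient g p = (\<Sum>y\<in>F. lam y * g y)" if g: "poly_deg_le k g" for g
  proof -
    obtain c where gc: "g = (\<lambda>x. \<Sum>\<alpha>\<in>?M. c \<alpha> * monomial_fun \<alpha> x)" using deg_le_M[OF g] by blast
    have "(q - p) \<bullet> gradient g p = (\<Sum>\<alpha>\<in>?M. c \<alpha> * ?d \<alpha>)" unfolding gc comb_grad ..
    also have "\<dots> = (\<Sum>\<alpha>\<in>?M. c \<alpha> * (\<Sum>y\<in>F. lam y * monomial_fun \<alpha> y))"
      using F(3) by (intro sum.cong) auto
    also have "\<dots> = (\<Sum>y\<in>F. lam y * (\<Sum>\<alpha>\<in>?M. c \<alpha> * monomial_fun \<alpha> y))"
      by (simp add: sum_distrib_left sum.swap[of _ F] algebra_simps)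
    also have "\<dots> = (\<Sum>y\<in>F. lam y * g y)" unfolding gc ..
    finally show ?thesis .
  qed
  then show ?thesis using F by blast
qed

lemma deg1_cases:
  fixes \<alpha> :: "'n::finite \<Rightarrow> nat"
  assumes "sum \<alpha> UNIV \<le> 1"
  shows "(\<forall>i. \<alpha> i = 0) \<or> (\<exists>i. \<alpha> i = 1 \<and> (\<forall>j. j \<noteq> i \<longrightarrow> \<alpha> j = 0))"
proof (cases "\<forall>i. \<alpha> i = 0")
  case False
  then obtain i where i: "\<alpha> i \<noteq> 0" by blast
  have "\<alpha> i \<le> 1" using member_le_sum[of i UNIV \<alpha>] assms by simp
  with i have ai: "\<alpha> i = 1" by simp
  have "\<alpha> j = 0" if "j \<noteq> i" for j
  proof -
    have "sum \<alpha> {i, j} \<le> sum \<alpha> UNIV" by (rule sum_mono2) auto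
    then show ?thesis using that ai assms by simp
  qed
  then show ?thesis using ai by blast
qed simp

definition aff :: "(real^'n::finite \<Rightarrow> real) \<Rightarrow> bool" where
  "aff f \<longleftrightarrow> (\<forall>x y t. f (x + t *\<^sub>R (y - x)) = f x + t * (f y - f x))"

lemma mono_aff:
  fixes \<alpha> :: "'n::finite \<Rightarrow> nat"
  assumes "sum \<alpha> UNIV \<le> 1"
  shows "aff (monomial_fun \<alpha>)"
  using deg1_cases[OF assms]
proof
  assume "\<forall>i. \<alpha> i = 0"
  then show ?thesis unfolding aff_def monomial_fun_def by simp
next
  assume "\<exists>i. \<alpha> i = 1 \<and> (\<forall>j. j \<noteq> i \<longrightarrow> \<alpha> j = 0)"
  then obtain i where i: "\<alpha> i = 1" "\<forall>j. j \<noteq> i \<longrightarrow> \<alpha> j = 0" by blast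
  have m: "monomial_fun \<alpha> x = x $ i" for x :: "real^'n"
  proof -
    have "monomial_fun \<alpha> x = (x $ i) ^ \<alpha> i * (\<Prod>j\<in>UNIV - {i}. (x $ j) ^ \<alpha> j)"
      unfolding monomial_fun_def by (simp add: prod.remove)
    also have "(\<Prod>j\<in>UNIV - {i}. (x $ j) ^ \<alpha> j) = 1"
      using i by (intro prod.neutral) auto
    finally show ?thesis using i by simp
  qed
  show ?thesis unfolding aff_def m by (simp add: algebra_simps)
qed

lemma deg1_aff:
  assumes "poly_deg_le 1 l"
  shows "aff l"
proof -
  obtain c where c: "finite {\<alpha>. c \<alpha> \<noteq> 0}" "\<forall>\<alpha>. c \<alpha> \<noteq> 0 \<longrightarrow> sum \<alpha> UNIV \<le> 1"
    "l = (\<lambda>x. \<Sum>\<alpha>\<in>{\<alpha>. c \<alpha> \<noteq> 0}. c \<alpha> * monomial_fun \<alpha> x)"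
    using assms unfolding poly_deg_le_def by blast
  have A: "aff (monomial_fun \<alpha>)" if "\<alpha> \<in> {\<alpha>. c \<alpha> \<noteq> 0}" for \<alpha>
    using mono_aff c(2) that by auto
  show ?thesis unfolding aff_def c(3)
  proof (intro allI)
    fix x y :: "real^'a" and t :: real
    have "(\<Sum>\<alpha>\<in>{\<alpha>. c \<alpha> \<noteq> 0}. c \<alpha> * monomial_fun \<alpha> (x + t *\<^sub>R (y - x)))
       = (\<Sum>\<alpha>\<in>{\<alpha>. c \<alpha> \<noteq> 0}. c \<alpha> * monomial_fun \<alpha> x + t * (c \<alpha> * monomial_fun \<alpha> y - c \<alpha> * monomial_fun \<alpha> x))"
    proof (rule sum.cong[OF refl])
      fix \<alpha> assume "\<alpha> \<in> {\<alpha>. c \<alpha> \<noteq> 0}"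
      then have "monomial_fun \<alpha> (x + t *\<^sub>R (y - x)) = monomial_fun \<alpha> x + t * (monomial_fun \<alpha> y - monomial_fun \<alpha> x)"
        using A unfolding aff_def by blast
      then show "c \<alpha> * monomial_fun \<alpha> (x + t *\<^sub>R (y - x)) = c \<alpha> * monomial_fun \<alpha> x + t * (c \<alpha> * monomial_fun \<alpha> y - c \<alpha> * monomial_fun \<alpha> x)"
        by (simp only: ring_distribs mult.left_commute)
    qed
    also have "\<dots> = (\<Sum>\<alpha>\<in>{\<alpha>. c \<alpha> \<noteq> 0}. c \<alpha> * monomial_fun \<alpha> x) + t * ((\<Sum>\<alpha>\<in>{\<alpha>. c \<alpha> \<noteq> 0}. c \<alpha> * monomial_fun \<alpha> y) - (\<Sum>\<alpha>\<in>{\<alpha>. c \<alpha> \<noteq> 0}. c \<alpha> * monomial_fun \<alpha> x))"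
      by (simp add: sum.distrib sum_distrib_left[symmetric] sum_subtractf[symmetric])
    finally show "(\<Sum>\<alpha>\<in>{\<alpha>. c \<alpha> \<noteq> 0}. c \<alpha> * monomial_fun \<alpha> (x + t *\<^sub>R (y - x))) =
         (\<Sum>\<alpha>\<in>{\<alpha>. c \<alpha> \<noteq> 0}. c \<alpha> * monomial_fun \<alpha> x) + t * ((\<Sum>\<alpha>\<in>{\<alpha>. c \<alpha> \<noteq> 0}. c \<alpha> * monomial_fun \<alpha> y) - (\<Sum>\<alpha>\<in>{\<alpha>. c \<alpha> \<noteq> 0}. c \<alpha> * monomial_fun \<alpha> x))" .
  qed
qed

lemma aff_deriv:
  fixes l :: "real^'n::finite \<Rightarrow> real"
  assumes "aff l" "(l has_derivative l') (at p)"
  shows "l' (q - p) = l q - l p"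
proof -
  let ?v = "q - p"
  have h1: "((\<lambda>s::real. p + s *\<^sub>R ?v) has_derivative (\<lambda>s. s *\<^sub>R ?v)) (at 0)"
    by (auto intro!: derivative_eq_intros)
  have h2: "(l has_derivative l') (at (p + 0 *\<^sub>R ?v))" using assms(2) by simp
  have d1: "((\<lambda>s::real. l (p + s *\<^sub>R ?v)) has_derivative (\<lambda>s. l' (s *\<^sub>R ?v))) (at 0)"
    using has_derivative_compose[OF h1 h2] .
  have eq: "(\<lambda>s::real. l (p + s *\<^sub>R ?v)) = (\<lambda>s. l p + s * (l q - l p))"
    using assms(1) unfolding aff_def by auto
  have d2: "((\<lambda>s::real. l (p + s *\<^sub>R ?v)) has_derivative (\<lambda>s. s * (l q - l p))) (at 0)"
    unfolding eq by (auto intro!: derivative_eq_intros)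
  from has_derivative_unique[OF d1 d2] have "(\<lambda>s. l' (s *\<^sub>R ?v)) = (\<lambda>s. s * (l q - l p))" .
  from fun_cong[OF this, of 1] show ?thesis by simp
qed

lemma amgm: "0 < (e::real) \<Longrightarrow> 2 * a * b \<le> e * b^2 + a^2 / e"
proof -
  assume e: "0 < e"
  have "0 \<le> (a - e * b)^2" by simp
  then have "2 * a * b * e \<le> e * b^2 * e + a^2" by (simp add: power2_eq_square algebra_simps)
  then show ?thesis using e by (simp add: field_simps)
qed

lemma sum_list_map_nth: "(\<Sum>g\<leftarrow>gs. h g) = (\<Sum>i<length gs. h (gs ! i))"
  by (simp add: sum_list_sum_nth atLeast0LessThan)

theorem mainTheorem14:
  fixes I :: "(real^'n::finite \<Rightarrow> real) set"
  assumes "poly_ideal I"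
    and "\<exists>p. convex_singular I p"
  shows "\<not> TH_exact I"
proof
  assume "TH_exact I"
  then obtain k where k: "k \<ge> 1" "theta_body k I = closure (convex hull (real_variety I))"
    unfolding TH_exact_def TH_exact_k_def by blast
  define V where "V = real_variety I"
  define H where "H = convex hull V"
  obtain p where "convex_singular I p" using assms(2) by blast
  then obtain q where pV: "p \<in> V" and pF: "p \<in> rel_frontier H"
      and qT: "q \<in> tangent_space I p" and qR: "q \<in> rel_interior H"
    unfolding convex_singular_def V_def H_def by blast
  have th: "theta_body k I = closure H" using k unfolding H_def V_def by simp
  obtain F lam where F: "finite F" "F \<subseteq> V"
      and lamF: "\<And>g. poly_deg_le k g \<Longrightarrow> (q - p) \<bullet> gradient g p = (\<Sum>y\<in>F. lam y * g y)"
    using grad_span[OF qT, of k] unfolding V_def by blast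
  have VH: "V \<subseteq> H" unfolding H_def by (rule hull_subset)
  have qH: "q \<in> H" using qR rel_interior_subset by blast
  obtain e where e: "e > 0" "ball q e \<inter> affine hull H \<subseteq> H"
    using qR unfolding mem_rel_interior_ball by blast
  define R where "R = (\<Sum>y\<in>F. norm (q - y)) + 1"
  have R: "R \<ge> 1" unfolding R_def by (simp add: sum_nonneg)
  define t where "t = e / (2 * R)"
  have t: "t > 0" unfolding t_def using e R by simp
  have zH: "q + (- t) *\<^sub>R (y - q) \<in> H" if y: "y \<in> F" for y
  proof -
    have "norm (q - y) \<le> (\<Sum>y\<in>F. norm (q - y))"
      using F(1) y by (intro member_le_sum) auto
    then have ny: "norm (q - y) \<le> R" unfolding R_def by simp
    have "dist q (q + (- t) *\<^sub>R (y - q)) = t * norm (q - y)"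
      using t by (simp add: dist_norm norm_minus_commute)
    also have "\<dots> \<le> t * R" using ny t by (simp add: mult_left_mono)
    also have "\<dots> < e" unfolding t_def using e R by (simp add: field_simps)
    finally have "q + (- t) *\<^sub>R (y - q) \<in> ball q e" by simp
    moreover have "q + (- t) *\<^sub>R (y - q) \<in> affine hull H"
    proof -
      have "(1 + t) *\<^sub>R q + (- t) *\<^sub>R y \<in> affine hull H"
        using y F(2) VH qH by (intro mem_affine affine_affine_hull hull_inc) auto
      moreover have "(1 + t) *\<^sub>R q + (- t) *\<^sub>R y = q + (- t) *\<^sub>R (y - q)"
        by (simp add: algebra_simps)
      ultimately show ?thesis by simp
    qed
    ultimately show ?thesis using e by blast
  qed
  define K where "K = (1 + t) / t"
  have K: "K > 0" unfolding K_def using t by simp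
  define Lam where "Lam = (\<Sum>y\<in>F. \<bar>lam y\<bar>)"
  have Lam: "Lam \<ge> 0" unfolding Lam_def by (simp add: sum_nonneg)
  define eps where "eps = 4 * Lam * K + 1"
  have LK: "Lam * K \<ge> 0" using Lam K by simp
  have eps: "eps > 0" "Lam * K / eps \<le> 1/4"
  proof -
    show e0: "eps > 0" unfolding eps_def using LK by simp
    have "Lam * K \<le> eps / 4" unfolding eps_def by simp
    then show "Lam * K / eps \<le> 1/4" using e0 by (simp add: field_simps)
  qed
  define B where "B = 1 + eps * Lam"
  have B: "B \<ge> 1" unfolding B_def using eps Lam by simp
  define s where "s = 1 / (2 * B)"
  have s: "s > 0" "B * s = 1/2" unfolding s_def using B by auto
  define r where "r = p + (- s) *\<^sub>R (q - p)"
  have rH: "r \<notin> closure H"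
  proof
    assume r: "r \<in> closure H"
    have "r - (s / (1 + s)) *\<^sub>R (r - q) \<in> rel_interior H"
      by (rule rel_interior_closure_convex_shrink) (use r qR s in \<open>auto simp: H_def\<close>)
    moreover have "r - (s / (1 + s)) *\<^sub>R (r - q) = p"
    proof -
      have "r - q = (1 + s) *\<^sub>R (p - q)" unfolding r_def by (simp add: algebra_simps)
      then have "(s / (1 + s)) *\<^sub>R (r - q) = s *\<^sub>R (p - q)" using s by simp
      then show ?thesis unfolding r_def by (simp add: algebra_simps)
    qed
    ultimately show False using pF unfolding rel_frontier_def by simp
  qed
  then obtain l where l1: "poly_deg_le 1 l" and lsos: "sos_mod I k l" and lr: "l r < 0"
    using th unfolding theta_body_def by force
  obtain gs where gs: "\<forall>g\<in>set gs. poly_deg_le k g" and fI: "(\<lambda>x. l x - (\<Sum>g\<leftarrow>gs. (g x)^2)) \<in> I"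
    using lsos unfolding sos_mod_def by blast
  define N where "N = length gs"
  define G where "G i = gs ! i" for i
  have Gk: "poly_deg_le k (G i)" if "i < N" for i using gs that unfolding G_def N_def by simp
  have lsum: "(\<Sum>g\<leftarrow>gs. (g x)^2) = (\<Sum>i<N. (G i x)^2)" for x
    unfolding G_def N_def by (rule sum_list_map_nth)
  define f where "f = (\<lambda>x. l x - (\<Sum>i<N. (G i x)^2))"
  have fI': "f \<in> I" using fI unfolding f_def lsum .
  have fV: "\<forall>y\<in>V. f y = 0" using fI' unfolding V_def real_variety_def by blast
  have lV: "l y = (\<Sum>i<N. (G i y)^2)" if "y \<in> V" for y using fV that unfolding f_def by auto
  have laff: "aff l" by (rule deg1_aff[OF l1])
  have lH: "l z \<ge> 0" if "z \<in> H" for z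
  proof -
    have "convex {z. l z \<ge> 0}"
      unfolding convex_def
    proof (intro ballI allI impI)
      fix x y :: "real^'n" and u v :: real
      assume x: "x \<in> {z. 0 \<le> l z}" and y: "y \<in> {z. 0 \<le> l z}" and u: "0 \<le> u" "0 \<le> v" "u + v = 1"
      have "u = 1 - v" using u by simp
      then have "u *\<^sub>R x + v *\<^sub>R y = x + v *\<^sub>R (y - x)" by (simp add: scaleR_diff_left scaleR_diff_right)
      then have "l (u *\<^sub>R x + v *\<^sub>R y) = l x + v * (l y - l x)" using laff unfolding aff_def by simp
      also have "\<dots> = u * l x + v * l y"
      proof -
        have eq: "l x = u * l x + v * l x" using u(3) by (metis distrib_right mult_1)
        show ?thesis using eq unfolding right_diff_distrib by linarith
      qed
      also have "\<dots> \<ge> 0" using x y u by simp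
      finally show "u *\<^sub>R x + v *\<^sub>R y \<in> {z. 0 \<le> l z}" by simp
    qed
    moreover have "V \<subseteq> {z. l z \<ge> 0}" using lV by (auto intro!: sum_nonneg)
    ultimately have "H \<subseteq> {z. l z \<ge> 0}" unfolding H_def by (rule hull_minimal[rotated])
    then show ?thesis using that by blast
  qed
  have lp: "l p \<ge> 0" using lH pV VH by blast
  have lq: "l q \<ge> 0" using lH qH by blast
  have lyK: "l y \<le> K * l q" if y: "y \<in> F" for y
  proof -
    have "0 \<le> l (q + (- t) *\<^sub>R (y - q))" using lH zH[OF y] by blast
    also have "\<dots> = l q + (- t) * (l y - l q)" using laff unfolding aff_def by blast
    finally have "t * l y \<le> (1 + t) * l q" by (simp add: algebra_simps)
    then show ?thesis unfolding K_def using t by (simp add: field_simps)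
  qed
  have lr': "l r = l p + (- s) * (l q - l p)" unfolding r_def using laff unfolding aff_def by blast
  obtain l' where l': "(l has_derivative l') (at p)"
    using deg_diff[OF l1] frechet_derivative_works by blast
  define G' where "G' i = frechet_derivative (G i) (at p)" for i
  have G': "(G i has_derivative G' i) (at p)" if "i < N" for i
    unfolding G'_def using deg_diff[OF Gk[OF that]] frechet_derivative_works by blast
  have fd: "(f has_derivative (\<lambda>h. l' h - (\<Sum>i<N. of_nat 2 * G' i h * G i p ^ (2 - 1)))) (at p)"
    unfolding f_def by (intro has_derivative_diff l' has_derivative_sum has_derivative_power G') auto
  have "(q - p) \<bullet> gradient f p = 0"
  proof -
    have "poly_fun f" using assms(1) fI' unfolding poly_ideal_def by blast
    then show ?thesis using qT fV unfolding tangent_space_def V_def by blast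
  qed
  then have "l' (q - p) = (\<Sum>i<N. 2 * G' i (q - p) * G i p)"
    unfolding grad_inner[OF fd] by simp
  moreover have "G' i (q - p) = (\<Sum>y\<in>F. lam y * G i y)" if "i < N" for i
    using lamF[OF Gk[OF that]] grad_inner[OF G'[OF that]] by simp
  ultimately have "l q - l p = (\<Sum>i<N. 2 * (\<Sum>y\<in>F. lam y * G i y) * G i p)"
    using aff_deriv[OF laff l'] by simp
  also have "\<dots> = (\<Sum>y\<in>F. \<Sum>i<N. lam y * (2 * G i y * G i p))"
    by (simp add: sum_distrib_left sum_distrib_right sum.swap[of _ F] algebra_simps)
  also have "\<dots> \<le> (\<Sum>y\<in>F. \<Sum>i<N. \<bar>lam y\<bar> * (eps * (G i p)^2 + (G i y)^2 / eps))"
  proof (intro sum_mono)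
    fix y i
    have "lam y * (2 * G i y * G i p) \<le> \<bar>lam y\<bar> * \<bar>2 * G i y * G i p\<bar>"
      by (metis abs_ge_self abs_mult)
    also have "\<dots> \<le> \<bar>lam y\<bar> * (eps * (G i p)^2 + (G i y)^2 / eps)"
    proof (rule mult_left_mono)
      have "\<bar>2 * G i y * G i p\<bar> = 2 * \<bar>G i y\<bar> * \<bar>G i p\<bar>" by (simp add: abs_mult)
      also have "\<dots> \<le> eps * \<bar>G i p\<bar>^2 + \<bar>G i y\<bar>^2 / eps" by (rule amgm[OF eps(1)])
      finally show "\<bar>2 * G i y * G i p\<bar> \<le> eps * (G i p)^2 + (G i y)^2 / eps" by simp
    qed simp
    finally show "lam y * (2 * G i y * G i p) \<le> \<bar>lam y\<bar> * (eps * (G i p)^2 + (G i y)^2 / eps)" .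
  qed
  also have "\<dots> = (\<Sum>y\<in>F. \<bar>lam y\<bar> * (eps * l p + l y / eps))"
  proof (rule sum.cong[OF refl])
    fix y assume y: "y \<in> F"
    have "(\<Sum>i<N. \<bar>lam y\<bar> * (eps * (G i p)^2 + (G i y)^2 / eps))
        = \<bar>lam y\<bar> * (eps * (\<Sum>i<N. (G i p)^2) + (\<Sum>i<N. (G i y)^2) / eps)"
    proof -
      have "(\<Sum>i<N. \<bar>lam y\<bar> * (eps * (G i p)^2 + (G i y)^2 / eps)) = \<bar>lam y\<bar> * (\<Sum>i<N. eps * (G i p)^2 + (G i y)^2 / eps)"
        by (rule sum_distrib_left[symmetric])
      also have "\<dots> = \<bar>lam y\<bar> * (eps * (\<Sum>i<N. (G i p)^2) + (\<Sum>i<N. (G i y)^2) / eps)"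
        by (simp add: sum.distrib sum_distrib_left sum_divide_distrib)
      finally show ?thesis .
    qed
    then show "(\<Sum>i<N. \<bar>lam y\<bar> * (eps * (G i p)^2 + (G i y)^2 / eps)) = \<bar>lam y\<bar> * (eps * l p + l y / eps)"
      using lV[OF pV] lV y F(2) by auto
  qed
  also have "\<dots> \<le> (\<Sum>y\<in>F. \<bar>lam y\<bar> * (eps * l p + K * l q / eps))"
  proof (intro sum_mono mult_left_mono)
    fix y assume "y \<in> F"
    then show "eps * l p + l y / eps \<le> eps * l p + K * l q / eps"
      using lyK eps(1) by (simp add: divide_right_mono)
  qed simp
  also have "\<dots> = (\<Sum>y\<in>F. \<bar>lam y\<bar>) * (eps * l p + K * l q / eps)"
    by (rule sum_distrib_right[symmetric])
  also have "\<dots> = Lam * eps * l p + (Lam * K / eps) * l q"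
    unfolding Lam_def[symmetric] using eps(1) by (simp add: field_simps)
  also have "\<dots> \<le> Lam * eps * l p + (1/4) * l q"
    using mult_right_mono[OF eps(2) lq] by simp
  finally have ineq1: "l q - l p \<le> Lam * eps * l p + (1/4) * l q" .
  then have c1: "(3/4) * l q \<le> B * l p" unfolding B_def by (simp add: algebra_simps)
  have c2: "(1 + s) * l p < s * l q" using lr lr' by (simp add: algebra_simps)
  have "s * l p \<ge> 0" using s lp by simp
  with c2 have "l p < s * l q" by (simp add: algebra_simps)
  then have "B * l p < B * (s * l q)" using B by simp
  with c1 have "(3/4) * l q < (1/2) * l q" using s by (simp add: mult.assoc[symmetric])
  then show False using lq by simp
qed

end
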